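(* There exists a constant $\Delta T$ (independent of $\alpha$) such that, for all sufficiently large $\alpha$, $T_{\max}\ge\frac1\lambda\big(\log\alpha-\frac1L\log\log A+\Delta T\big)$. Furthermore, for all $t\le\frac1\lambda\big(\log\alpha-\frac1L\log\log A+\Delta T\big)$, $$\Big\|\frac1\alpha e^{\lambda t}\boldsymbol{\theta}(t)-\bar{\boldsymbol{\theta}}_{\mathrm{init}}\Big\|_2=O(\alpha^{-L}\log A)\cdot e^{L\lambda t},$$ where the $O(\cdot)$ constant does not depend on $\alpha$ or $t$.
   Context: Binary classification setting. Training data $\{(\boldsymbol{x}_i,y_i)\}_{i=1}^n$, $y_i\in\{\pm1\}$. Model $f(\boldsymbol{\theta};\boldsymbol{x})$, $\boldsymbol{\theta}\in\mathbb{R}^D$, $\mathcal{C}^2$ and $L$-homogeneous in $\boldsymbol{\theta}$ for every $\boldsymbol{x}$; $f_i(\boldsymbol{\theta}):=f(\boldsymbol{\theta};\boldsymbol{x}_i)$. Fixed $\bar{\boldsymbol{\theta}}_{\mathrm{init}}$ with $f(\bar{\boldsymbol{\theta}}_{\mathrm{init}};\boldsymbol{x})=0$ for all $\boldsymbol{x}$. Loss $\mathcal{L}(\boldsymbol{\theta})=\frac1n\sum_ie^{-y_if_i(\boldsymbol{\theta})}$, $\mathcal{L}_\lambda=\mathcal{L}+\frac\lambda2\|\boldsymbol{\theta}\|_2^2$, $\lambda=\lambda(\alpha)=\Theta(\alpha^{-p})$ for a constant $p>0$. $\boldsymbol{\theta}(t)$ is the gradient flow $\frac{d\boldsymbol{\theta}}{dt}=-\nabla\mathcal{L}_\lambda(\boldsymbol{\theta})$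 from $\boldsymbol{\theta}(0)=\alpha\bar{\boldsymbol{\theta}}_{\mathrm{init}}$. Assume some $\boldsymbol{h}$ satisfies $y_i\langle\nabla f_i(\bar{\boldsymbol{\theta}}_{\mathrm{init}}),\boldsymbol{h}\rangle>0$ $\forall i$; $\boldsymbol{h}^*_{\mathrm{ntk}}$ is the unit vector in the direction of the unique solution of $\min\frac12\|\boldsymbol{h}\|_2^2$ s.t. $y_i\langle\nabla f_i(\bar{\boldsymbol{\theta}}_{\mathrm{init}}),\boldsymbol{h}\rangle\ge1$, and $\gamma_{\mathrm{ntk}}:=\min_iy_i\langle\nabla f_i(\bar{\boldsymbol{\theta}}_{\mathrm{init}}),\boldsymbol{h}^*_{\mathrm{ntk}}\rangle$. $\epsilon_{\max}>0$ is a fixed constant such that $\max_{i\in[n]}\|\nabla f_i(\boldsymbol{\theta})-\nabla f_i(\bar{\boldsymbol{\theta}}_{\mathrm{init}})\|_2<\frac{\gamma_{\mathrm{ntk}}}2$ whenever $\|\boldsymbol{\theta}-\bar{\boldsymbol{\theta}}_{\mathrm{init}}\|_2<\epsilon_{\max}$. $T_{\max}:=\inf\{t\ge0:\|\frac{e^{\lambda t}}{\alpha}\boldsymbol{\theta}(t)-\bar{\boldsymbol{\theta}}_{\mathrm{init}}\|_2>\epsilon_{\max}\}$ and $A:=\frac{\alpha^{2(L-1)}}{\lambda}$. *)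

theory Defs
  imports "HOL-Analysis.Analysis" "HOL-Library.Landau_Symbols"
begin

definition grad :: "('a::real_inner \<Rightarrow> real) \<Rightarrow> 'a \<Rightarrow> 'a" where
  "grad F th = (THE D. GDERIV F th :> D)"

definition C2_fun :: "('a::euclidean_space \<Rightarrow> real) \<Rightarrow> bool" where
  "C2_fun F \<longleftrightarrow> (\<forall>th. F differentiable (at th)) \<and>
     (\<exists>H :: 'a \<Rightarrow> ('a \<Rightarrow>\<^sub>L 'a). continuous_on UNIV H \<and>
        (\<forall>th. (grad F has_derivative blinfun_apply (H th)) (at th)))"

definition exp_loss :: "nat \<Rightarrow> (nat \<Rightarrow> 'x) \<Rightarrow> (nat \<Rightarrow> real) \<Rightarrow> ('a \<Rightarrow> 'x \<Rightarrow> real) \<Rightarrow> 'a \<Rightarrow> real" where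
  "exp_loss n xs ys f th = (1 / real n) * (\<Sum>i<n. exp (- (ys i * f th (xs i))))"

definition reg_loss :: "real \<Rightarrow> nat \<Rightarrow> (nat \<Rightarrow> 'x) \<Rightarrow> (nat \<Rightarrow> real) \<Rightarrow> ('a::real_normed_vector \<Rightarrow> 'x \<Rightarrow> real) \<Rightarrow> 'a \<Rightarrow> real" where
  "reg_loss lam n xs ys f th = exp_loss n xs ys f th + lam / 2 * (norm th)\<^sup>2"

definition ntk_feasible :: "nat \<Rightarrow> (nat \<Rightarrow> 'x) \<Rightarrow> (nat \<Rightarrow> real) \<Rightarrow> ('a::real_inner \<Rightarrow> 'x \<Rightarrow> real) \<Rightarrow> 'a \<Rightarrow> 'a \<Rightarrow> bool" where
  "ntk_feasible n xs ys f th0 h \<longleftrightarrow>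
     (\<forall>i<n. ys i * inner (grad (\<lambda>th. f th (xs i)) th0) h \<ge> 1)"

definition ntk_sol :: "nat \<Rightarrow> (nat \<Rightarrow> 'x) \<Rightarrow> (nat \<Rightarrow> real) \<Rightarrow> ('a::real_inner \<Rightarrow> 'x \<Rightarrow> real) \<Rightarrow> 'a \<Rightarrow> 'a" where
  "ntk_sol n xs ys f th0 = (THE h. ntk_feasible n xs ys f th0 h \<and>
      (\<forall>h'. ntk_feasible n xs ys f th0 h' \<longrightarrow> (1/2) * (norm h)\<^sup>2 \<le> (1/2) * (norm h')\<^sup>2))"

definition h_ntk :: "nat \<Rightarrow> (nat \<Rightarrow> 'x) \<Rightarrow> (nat \<Rightarrow> real) \<Rightarrow> ('a::real_inner \<Rightarrow> 'x \<Rightarrow> real) \<Rightarrow> 'a \<Rightarrow> 'a" where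
  "h_ntk n xs ys f th0 = sgn (ntk_sol n xs ys f th0)"

definition gamma_ntk :: "nat \<Rightarrow> (nat \<Rightarrow> 'x) \<Rightarrow> (nat \<Rightarrow> real) \<Rightarrow> ('a::real_inner \<Rightarrow> 'x \<Rightarrow> real) \<Rightarrow> 'a \<Rightarrow> real" where
  "gamma_ntk n xs ys f th0 =
     Min ((\<lambda>i. ys i * inner (grad (\<lambda>th. f th (xs i)) th0) (h_ntk n xs ys f th0)) ` {..<n})"

text \<open>T_max := inf {t >= 0. ||e^{lambda t}/alpha theta(t) - theta_init|| > eps_max},
  as an extended real (inf of the empty set = +infinity).\<close>
definition T_max :: "real \<Rightarrow> real \<Rightarrow> (real \<Rightarrow> 'a::real_normed_vector) \<Rightarrow> 'a \<Rightarrow> real \<Rightarrow> ereal" where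
  "T_max lam alpha theta th0 eps =
     Inf (ereal ` {t. t \<ge> 0 \<and> norm ((exp (lam * t) / alpha) *\<^sub>R theta t - th0) > eps})"

end

theory Submission
  imports Defs "HOL-Real_Asymp.Real_Asymp"
begin


lemma gderiv_unique:
  fixes F :: "'a::real_inner \<Rightarrow> real"
  assumes "GDERIV F x :> D" "GDERIV F x :> D'"
  shows "D = D'"
proof -
  have "(\<lambda>h. h \<bullet> D) = (\<lambda>h. h \<bullet> D')"
    using assms unfolding gderiv_def by (rule has_derivative_unique)
  hence "(D - D') \<bullet> D = (D - D') \<bullet> D'" by metis
  hence "(D - D') \<bullet> (D - D') = 0" by (simp add: inner_diff_right)
  thus ?thesis by simp
qed

lemma grad_eq:
  fixes F :: "'a::real_inner \<Rightarrow> real"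
  assumes "GDERIV F x :> D"
  shows "grad F x = D"
  unfolding grad_def using assms gderiv_unique by blast

lemma grad_gderiv:
  fixes F :: "'a::euclidean_space \<Rightarrow> real"
  assumes "F differentiable (at x)"
  shows "GDERIV F x :> grad F x"
proof -
  obtain F' where F': "(F has_derivative F') (at x)" using assms by (auto simp: differentiable_def)
  have lin: "linear F'" using F' has_derivative_linear by blast
  define D where "D = (\<Sum>b\<in>Basis. F' b *\<^sub>R b)"
  have "F' h = h \<bullet> D" for h
  proof -
    have "F' h = F' (\<Sum>b\<in>Basis. (h \<bullet> b) *\<^sub>R b)" by (simp add: euclidean_representation)
    also have "\<dots> = (\<Sum>b\<in>Basis. (h \<bullet> b) * F' b)"
      using lin by (simp add: linear_sum linear_scale)
    also have "\<dots> = h \<bullet> D" by (simp add: D_def inner_sum_right mult.commute)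
    finally show ?thesis .
  qed
  hence "F' = (\<lambda>h. h \<bullet> D)" by auto
  hence "GDERIV F x :> D" using F' by (simp add: gderiv_def)
  thus ?thesis using grad_eq by metis
qed

lemma grad_homog:
  fixes F :: "'a::euclidean_space \<Rightarrow> real"
  assumes diff: "\<And>x. F differentiable (at x)"
    and hom: "\<And>c x. c > 0 \<Longrightarrow> F (c *\<^sub>R x) = c powr L * F x"
    and c: "c > 0"
  shows "grad F (c *\<^sub>R x) = c powr (L - 1) *\<^sub>R grad F x"
proof -
  have D1: "(F has_derivative (\<lambda>h. h \<bullet> grad F (c *\<^sub>R x))) (at (c *\<^sub>R x))"
    using grad_gderiv[OF diff] by (simp add: gderiv_def)
  have "((\<lambda>y. F (c *\<^sub>R y)) has_derivative (\<lambda>h. (c *\<^sub>R h) \<bullet> grad F (c *\<^sub>R x))) (at x)"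
    using has_derivative_compose[OF has_derivative_scaleR_right[OF has_derivative_ident] D1]
    by (simp add: o_def)
  hence G1: "GDERIV (\<lambda>y. F (c *\<^sub>R y)) x :> c *\<^sub>R grad F (c *\<^sub>R x)"
    by (simp add: gderiv_def)
  have "GDERIV (\<lambda>y. c powr L * F y) x :> c powr L *\<^sub>R grad F x"
    using grad_gderiv[OF diff, of x] unfolding gderiv_def
    by (auto intro!: derivative_eq_intros)
  hence G2: "GDERIV (\<lambda>y. F (c *\<^sub>R y)) x :> c powr L *\<^sub>R grad F x"
    using hom[OF c] by simp
  have eq: "c *\<^sub>R grad F (c *\<^sub>R x) = c powr L *\<^sub>R grad F x" using gderiv_unique[OF G1 G2] .
  have "grad F (c *\<^sub>R x) = inverse c *\<^sub>R (c *\<^sub>R grad F (c *\<^sub>R x))" using c by simp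
  also have "\<dots> = inverse c *\<^sub>R (c powr L *\<^sub>R grad F x)" using eq by simp
  also have "\<dots> = (c powr L / c) *\<^sub>R grad F x" by (simp add: divide_inverse_commute)
  finally have "grad F (c *\<^sub>R x) = (c powr L / c) *\<^sub>R grad F x" .
  thus ?thesis using c by (simp add: powr_diff)
qed

lemma euler:
  fixes F :: "'a::euclidean_space \<Rightarrow> real"
  assumes diff: "\<And>x. F differentiable (at x)"
    and hom: "\<And>c x. c > 0 \<Longrightarrow> F (c *\<^sub>R x) = c powr L * F x"
  shows "grad F x \<bullet> x = L * F x"
proof -
  have D1: "(F has_derivative (\<lambda>h. h \<bullet> grad F (1 *\<^sub>R x))) (at (1 *\<^sub>R x))"
    using grad_gderiv[OF diff] by (simp add: gderiv_def)
  have "((\<lambda>c. F (c *\<^sub>R x)) has_derivative (\<lambda>h. (h *\<^sub>R x) \<bullet> grad F (1 *\<^sub>R x))) (at 1)"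
    using has_derivative_compose[OF has_derivative_scaleR_left[OF has_derivative_ident, of x] D1]
    by (simp add: o_def)
  hence A: "((\<lambda>c. F (c *\<^sub>R x)) has_real_derivative (x \<bullet> grad F x)) (at 1)"
    unfolding has_field_derivative_def by (simp add: mult.commute[of _ "x \<bullet> grad F x"])
  have B: "((\<lambda>c. c powr L * F x) has_real_derivative L * F x) (at 1)"
    by (auto intro!: derivative_eq_intros)
  have B': "((\<lambda>c. F (c *\<^sub>R x)) has_real_derivative L * F x) (at 1)"
    by (rule has_field_derivative_transform_within_open[OF B, of "{0<..}"]) (auto simp: hom)
  have "x \<bullet> grad F x = L * F x" using DERIV_unique[OF A B'] .
  thus ?thesis by (simp add: inner_commute)
qed




definition Fv :: "nat \<Rightarrow> (nat \<Rightarrow> 'x) \<Rightarrow> (nat \<Rightarrow> real) \<Rightarrow> ('a::real_inner \<Rightarrow> 'x \<Rightarrow> real) \<Rightarrow> 'a \<Rightarrow> 'a" where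
  "Fv n xs ys f th = - ((1 / real n) *\<^sub>R (\<Sum>i<n. (exp (- (ys i * f th (xs i))) * ys i) *\<^sub>R grad (\<lambda>th. f th (xs i)) th))"

lemma gderiv_exp_loss:
  fixes f :: "'a::euclidean_space \<Rightarrow> 'x \<Rightarrow> real"
  assumes diff: "\<And>i x. (\<lambda>th. f th (xs i)) differentiable (at x)"
  shows "GDERIV (exp_loss n xs ys f) th :> Fv n xs ys f th"
proof -
  have each: "((\<lambda>th. f th (xs i)) has_derivative (\<lambda>h. h \<bullet> grad (\<lambda>th. f th (xs i)) th)) (at th)" for i
    using grad_gderiv[OF diff] by (simp add: gderiv_def)
  have "((\<lambda>th. 1 / real n * (\<Sum>i<n. exp (- (ys i * f th (xs i))))) has_derivative
     (\<lambda>h. 1 / real n * (\<Sum>i<n. (- (ys i * (h \<bullet> grad (\<lambda>th. f th (xs i)) th))) * exp (- (ys i * f th (xs i)))))) (at th)"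
    by (intro derivative_intros each)
  moreover have "(\<lambda>h. 1 / real n * (\<Sum>i<n. (- (ys i * (h \<bullet> grad (\<lambda>th. f th (xs i)) th))) * exp (- (ys i * f th (xs i)))))
      = (\<lambda>h. h \<bullet> Fv n xs ys f th)"
    by (auto simp: Fv_def inner_sum_right sum_distrib_left algebra_simps sum_negf)
  ultimately show ?thesis unfolding gderiv_def exp_loss_def[abs_def] by simp
qed

lemma gderiv_reg_loss:
  fixes f :: "'a::euclidean_space \<Rightarrow> 'x \<Rightarrow> real"
  assumes diff: "\<And>i x. (\<lambda>th. f th (xs i)) differentiable (at x)"
  shows "GDERIV (reg_loss lam n xs ys f) th :> Fv n xs ys f th + lam *\<^sub>R th"
proof -
  have A: "(exp_loss n xs ys f has_derivative (\<lambda>h. h \<bullet> Fv n xs ys f th)) (at th)"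
    using gderiv_exp_loss[where xs=xs and f=f, OF diff] by (simp add: gderiv_def)
  have "((\<lambda>th. exp_loss n xs ys f th + lam / 2 * (th \<bullet> th)) has_derivative
      (\<lambda>h. h \<bullet> Fv n xs ys f th + lam / 2 * (th \<bullet> h + h \<bullet> th))) (at th)"
    by (intro derivative_intros A has_derivative_inner[OF has_derivative_ident has_derivative_ident])
  moreover have "(\<lambda>h. h \<bullet> Fv n xs ys f th + lam / 2 * (th \<bullet> h + h \<bullet> th)) = (\<lambda>h. h \<bullet> (Fv n xs ys f th + lam *\<^sub>R th))"
    by (auto simp: inner_add_right inner_commute algebra_simps)
  moreover have "reg_loss lam n xs ys f = (\<lambda>th. exp_loss n xs ys f th + lam / 2 * (th \<bullet> th))"
    by (auto simp: reg_loss_def[abs_def] power2_norm_eq_inner)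
  ultimately show ?thesis unfolding gderiv_def by simp
qed

lemma chain_gderiv:
  assumes "GDERIV F (x t) :> D" "(x has_vector_derivative v) (at t)"
  shows "((\<lambda>s. F (x s)) has_real_derivative (v \<bullet> D)) (at t)"
proof -
  have "((\<lambda>s. F (x s)) has_derivative (\<lambda>s. (s *\<^sub>R v) \<bullet> D)) (at t)"
    using has_derivative_compose[of x "\<lambda>s. s *\<^sub>R v" t UNIV F "\<lambda>h. h \<bullet> D"] assms
    unfolding gderiv_def has_vector_derivative_def by (simp add: o_def)
  thus ?thesis unfolding has_field_derivative_def by (simp add: mult.commute[of _ "v \<bullet> D"])
qed




lemma weighted_bounds:
  fixes v :: "nat \<Rightarrow> 'a::real_inner"
  assumes w: "\<And>i. i<n \<Longrightarrow> w i \<ge> 0" and y: "\<And>i. i<n \<Longrightarrow> \<bar>y i\<bar> = 1"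
    and lo: "\<And>i. i<n \<Longrightarrow> y i * (v i \<bullet> h) \<ge> A" and up: "\<And>i. i<n \<Longrightarrow> norm (v i) \<le> B"
  shows "(\<Sum>i<n. (w i * y i) *\<^sub>R v i) \<bullet> h \<ge> A * (\<Sum>i<n. w i)"
    and "norm (\<Sum>i<n. (w i * y i) *\<^sub>R v i) \<le> B * (\<Sum>i<n. w i)"
proof -
  have "(\<Sum>i<n. (w i * y i) *\<^sub>R v i) \<bullet> h = (\<Sum>i<n. w i * (y i * (v i \<bullet> h)))"
    by (simp add: inner_sum_left algebra_simps)
  also have "\<dots> \<ge> (\<Sum>i<n. w i * A)"
    by (intro sum_mono mult_left_mono) (use w lo in auto)
  finally show "(\<Sum>i<n. (w i * y i) *\<^sub>R v i) \<bullet> h \<ge> A * (\<Sum>i<n. w i)"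
    by (simp add: sum_distrib_left mult.commute)
  have "norm (\<Sum>i<n. (w i * y i) *\<^sub>R v i) \<le> (\<Sum>i<n. norm ((w i * y i) *\<^sub>R v i))"
    by (rule norm_sum)
  also have "\<dots> = (\<Sum>i<n. w i * norm (v i))"
    by (intro sum.cong) (use w y in \<open>auto simp: abs_mult\<close>)
  also have "\<dots> \<le> (\<Sum>i<n. w i * B)"
    by (intro sum_mono mult_left_mono) (use w up in auto)
  finally show "norm (\<Sum>i<n. (w i * y i) *\<^sub>R v i) \<le> B * (\<Sum>i<n. w i)"
    by (simp add: sum_distrib_left mult.commute)
qed

lemma M_up_lemma:
  fixes m :: "nat \<Rightarrow> real"
  assumes n: "n \<ge> 1"
  defines "l \<equiv> 1 / real n * (\<Sum>i<n. exp (- m i))"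
  shows "1 / real n * (\<Sum>i<n. exp (- m i) * m i) \<le> - l * ln l"
proof -
  have lpos: "l > 0" unfolding l_def using n by (intro mult_pos_pos sum_pos) (auto simp: lessThan_empty_iff)
  have trm: "exp (- m i) * m i \<le> exp (- m i) * (- ln l) - exp (- m i) + l" for i
  proof -
    have "ln (l / exp (- m i)) \<le> l / exp (- m i) - 1" using lpos by (intro ln_le_minus_one) auto
    hence "ln l + m i \<le> l / exp (- m i) - 1" using lpos by (simp add: ln_div)
    hence "exp (- m i) * (ln l + m i) \<le> exp (- m i) * (l / exp (- m i) - 1)"
      by (intro mult_left_mono) auto
    thus ?thesis by (simp add: algebra_simps)
  qed
  have "(\<Sum>i<n. exp (- m i) * m i) \<le> (\<Sum>i<n. exp (- m i) * (- ln l) - exp (- m i) + l)"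
    by (intro sum_mono trm)
  also have "\<dots> = - ln l * (\<Sum>i<n. exp (- m i)) - (\<Sum>i<n. exp (- m i)) + real n * l"
    by (simp add: sum.distrib sum_subtractf sum_distrib_left mult.commute)
  also have "(\<Sum>i<n. exp (- m i)) = real n * l" unfolding l_def using n by simp
  finally have "(\<Sum>i<n. exp (- m i) * m i) \<le> real n * (- l * ln l)" by (simp add: algebra_simps)
  thus ?thesis using n by (simp add: field_simps)
qed

lemma M_low_lemma:
  fixes m :: "nat \<Rightarrow> real"
  assumes n: "n \<ge> 1"
  defines "l \<equiv> 1 / real n * (\<Sum>i<n. exp (- m i))"
  assumes l1: "l \<le> 1"
  shows "1 / real n * (\<Sum>i<n. exp (- m i) * m i) \<ge> - ln (real n) * l"
proof -
  have S: "(\<Sum>i<n. exp (- m i)) = real n * l" unfolding l_def using n by simp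
  have trm: "exp (- m i) * m i \<ge> exp (- m i) * (- ln (real n))" if i: "i < n" for i
  proof -
    have "exp (- m i) \<le> (\<Sum>j<n. exp (- m j))"
      using i by (intro member_le_sum) auto
    also have "\<dots> \<le> real n" using S l1 n by (simp add: mult_left_le)
    finally have "- m i \<le> ln (real n)" using n by (simp add: exp_le_cancel_iff ln_ge_iff)
    thus ?thesis by (intro mult_left_mono) auto
  qed
  have "(\<Sum>i<n. exp (- m i) * m i) \<ge> (\<Sum>i<n. exp (- m i) * (- ln (real n)))"
    by (intro sum_mono trm) auto
  also have "(\<Sum>i<n. exp (- m i) * (- ln (real n))) = - ln (real n) * (real n * l)"
  proof -
    have "(\<Sum>i<n. exp (- m i) * (- ln (real n))) = (\<Sum>i<n. exp (- m i)) * (- ln (real n))"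
      by (simp add: sum_distrib_right sum_negf)
    thus ?thesis using S by simp
  qed
  finally show ?thesis using n by (simp add: field_simps)
qed

lemma Fv_inner_self:
  fixes f :: "'a::euclidean_space \<Rightarrow> 'x \<Rightarrow> real"
  assumes eul: "\<And>i. grad (\<lambda>th. f th (xs i)) x \<bullet> x = L * f x (xs i)"
  shows "x \<bullet> Fv n xs ys f x = - L * (1 / real n * (\<Sum>i<n. exp (- (ys i * f x (xs i))) * (ys i * f x (xs i))))"
proof -
  have "x \<bullet> Fv n xs ys f x = - (1 / real n * (\<Sum>i<n. (exp (- (ys i * f x (xs i))) * ys i) * (x \<bullet> grad (\<lambda>th. f th (xs i)) x)))"
    by (simp add: Fv_def inner_sum_right)
  also have "\<dots> = - (1 / real n * (\<Sum>i<n. L * (exp (- (ys i * f x (xs i))) * (ys i * f x (xs i)))))"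
    using eul by (simp add: inner_commute algebra_simps)
  also have "\<dots> = - L * (1 / real n * (\<Sum>i<n. exp (- (ys i * f x (xs i))) * (ys i * f x (xs i))))"
    by (simp add: sum_distrib_left[symmetric] algebra_simps)
  finally show ?thesis .
qed





lemma core_l_le1:
  fixes l M nV :: "real \<Rightarrow> real"
  assumes lpos: "\<And>t. t \<ge> 0 \<Longrightarrow> l t > 0"
    and l0: "l 0 = 1"
    and lcont: "continuous_on {0..} l"
    and ld: "\<And>t. t > 0 \<Longrightarrow> (l has_real_derivative (- ((nV t)^2) + c * M t)) (at t)"
    and M_up: "\<And>t. t \<ge> 0 \<Longrightarrow> M t \<le> - l t * ln (l t)"
    and c: "c \<ge> 0"
    and t: "t \<ge> 0"
  shows "l t \<le> 1"
proof -
  have "(\<lambda>y. exp (c*y) * ln (l y)) t \<le> (\<lambda>y. exp (c*y) * ln (l y)) 0"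
  proof (rule DERIV_nonpos_imp_decreasing_open[OF t])
    fix x assume x: "0 < x" "x < t"
    have lx: "l x > 0" using lpos x by auto
    have D: "((\<lambda>y. exp (c*y) * ln (l y)) has_real_derivative
        exp (c*x) * c * ln (l x) + exp (c*x) * ((- ((nV x)^2) + c * M x) / l x)) (at x)"
      using ld[of x] x lx by (auto intro!: derivative_eq_intros simp: field_simps)
    have "c * M x \<le> c * (- l x * ln (l x))" using mult_left_mono[OF M_up[of x] c] x by simp
    hence "(- ((nV x)^2) + c * M x) / l x \<le> - c * ln (l x)"
      using lx by (simp add: divide_le_eq algebra_simps) (smt (verit) zero_le_power2)
    hence "exp (c*x) * ((- ((nV x)^2) + c * M x) / l x) \<le> exp (c*x) * (- c * ln (l x))"
      by (intro mult_left_mono) auto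
    hence "exp (c*x) * c * ln (l x) + exp (c*x) * ((- ((nV x)^2) + c * M x) / l x) \<le> 0"
      by (simp add: algebra_simps)
    with D show "\<exists>y. ((\<lambda>y. exp (c*y) * ln (l y)) has_real_derivative y) (at x) \<and> y \<le> 0" by blast
  next
    have "continuous_on {0..t} l" using lcont by (rule continuous_on_subset) auto
    moreover have "\<forall>y\<in>{0..t}. l y \<noteq> 0" using lpos by (auto simp: less_le)
    ultimately show "continuous_on {0..t} (\<lambda>y. exp (c*y) * ln (l y))"
      by (intro continuous_intros) (auto simp: lpos)
  qed
  hence "exp (c*t) * ln (l t) \<le> 0" using l0 by simp
  hence "ln (l t) \<le> 0" by (simp add: mult_le_0_iff)
  thus ?thesis using lpos[OF t] by simp
qed



lemma core_Lambda_bound: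
  fixes l M nV :: "real \<Rightarrow> real"
  assumes lpos: "\<And>t. t \<ge> 0 \<Longrightarrow> l t > 0"
    and l0: "l 0 = 1"
    and lcont: "continuous_on {0..} l"
    and ld: "\<And>t. t > 0 \<Longrightarrow> (l has_real_derivative (- ((nV t)^2) + c * M t)) (at t)"
    and M_low: "\<And>t. t \<ge> 0 \<Longrightarrow> M t \<ge> - kk * l t"
    and reg2: "\<And>t. 0 < t \<Longrightarrow> t < t1 \<Longrightarrow> (nV t)^2 \<le> b * (l t)^2"
    and c: "c \<ge> 0" and kk: "kk \<ge> 0" and b: "b \<ge> 0" and t1: "t1 \<ge> 0"
  shows "- ln (l t1) \<le> c*kk*t1 + ln (1 + b*t1)"
proof -
  define k where "k = c * kk"
  have k: "k \<ge> 0" using c kk by (simp add: k_def)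
  have "(\<lambda>y. exp (-k*y) * inverse (l y) - b*y) t1 \<le> (\<lambda>y. exp (-k*y) * inverse (l y) - b*y) 0"
  proof (rule DERIV_nonpos_imp_decreasing_open[OF t1])
    fix x assume x: "0 < x" "x < t1"
    have lx: "l x > 0" using lpos x by auto
    define l' where "l' = - ((nV x)^2) + c * M x"
    define e where "e = exp (-k*x)"
    have e: "e > 0" "e \<le> 1" using k x by (auto simp: e_def)
    have D: "((\<lambda>y. exp (-k*y) * inverse (l y) - b*y) has_real_derivative
        e * (-k) * inverse (l x) + e * (- ((inverse (l x))^2) * l') - b) (at x)"
      using ld[of x] x lx unfolding l'_def e_def
      by (auto intro!: derivative_eq_intros simp: field_simps power2_eq_square)
    have m: "- (c * M x) \<le> k * l x" using mult_left_mono[OF M_low[of x] c] x by (simp add: k_def)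
    have "- l' \<le> b * (l x)^2 + k * l x" using reg2[of x] x m by (simp add: l'_def)
    hence "- l' * (inverse (l x))^2 \<le> (b * (l x)^2 + k * l x) * (inverse (l x))^2"
      by (intro mult_right_mono) auto
    also have "\<dots> = b + k * inverse (l x)" using lx by (simp add: field_simps power2_eq_square)
    finally have "(- ((inverse (l x))^2) * l') \<le> b + k * inverse (l x)" by (simp add: algebra_simps)
    hence "e * (- ((inverse (l x))^2) * l') \<le> e * (b + k * inverse (l x))"
      using e by (intro mult_left_mono) auto
    hence "e * (-k) * inverse (l x) + e * (- ((inverse (l x))^2) * l') - b \<le> b * (e - 1)"
      by (simp add: algebra_simps)
    also have "\<dots> \<le> 0" using b e by (simp add: mult_le_0_iff)
    finally show "\<exists>y. ((\<lambda>y. exp (-k*y) * inverse (l y) - b*y) has_real_derivative y) (at x) \<and> y \<le> 0"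
      using D by blast
  next
    have "continuous_on {0..t1} l" using lcont by (rule continuous_on_subset) auto
    moreover have "\<forall>y\<in>{0..t1}. l y \<noteq> 0" using lpos by (auto simp: less_le)
    ultimately show "continuous_on {0..t1} (\<lambda>y. exp (-k*y) * inverse (l y) - b*y)"
      by (intro continuous_intros) auto
  qed
  hence A: "exp (-k*t1) * inverse (l t1) \<le> 1 + b * t1" using l0 by simp
  have lt: "l t1 > 0" using lpos t1 by auto
  have "inverse (l t1) \<le> exp (k*t1) * (1 + b*t1)"
  proof -
    have "inverse (l t1) = exp (k*t1) * (exp (-k*t1) * inverse (l t1))"
      by (simp add: exp_minus field_simps)
    also have "\<dots> \<le> exp (k*t1) * (1 + b*t1)" using A by (intro mult_left_mono) auto
    finally show ?thesis .
  qed
  hence "ln (inverse (l t1)) \<le> ln (exp (k*t1) * (1 + b*t1))"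
    using lt b t1 by (subst ln_le_cancel_iff) (auto intro!: mult_pos_pos add_pos_nonneg)
  also have "\<dots> = k*t1 + ln (1 + b*t1)"
  proof -
    have "1 + b*t1 > 0" using b t1 by (simp add: add_pos_nonneg)
    thus ?thesis by (subst ln_mult) auto
  qed
  finally show ?thesis using lt by (simp add: ln_inverse k_def)
qed



lemma vd_inner: "(u has_vector_derivative w) (at x) \<Longrightarrow> ((\<lambda>y. (u y - u0) \<bullet> (e::'a::real_inner)) has_real_derivative w \<bullet> e) (at x)"
  unfolding has_field_derivative_def has_vector_derivative_def
  by (auto intro!: derivative_eq_intros simp: fun_eq_iff)

lemma core_norm_bound:
  fixes l M nV :: "real \<Rightarrow> real" and u W :: "real \<Rightarrow> 'a::real_inner"
  assumes lpos: "\<And>t. t \<ge> 0 \<Longrightarrow> l t > 0"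
    and l0: "l 0 = 1"
    and lcont: "continuous_on {0..} l"
    and ld: "\<And>t. t > 0 \<Longrightarrow> (l has_real_derivative (- ((nV t)^2) + c * M t)) (at t)"
    and M_up: "\<And>t. t \<ge> 0 \<Longrightarrow> M t \<le> - l t * ln (l t)"
    and l_le1: "\<And>t. t \<ge> 0 \<Longrightarrow> l t \<le> 1"
    and ucont: "continuous_on {0..} u"
    and u0: "u 0 = u0"
    and ud: "\<And>t. t > 0 \<Longrightarrow> (u has_vector_derivative W t) (at t)"
    and reg1: "\<And>t. 0 < t \<Longrightarrow> t < t1 \<Longrightarrow> norm (W t) \<le> a * exp (c*t) * (nV t)^2 / l t"
    and c: "c \<ge> 0" and a: "a \<ge> 0" and t1: "t1 \<ge> 0"
  shows "norm (u t1 - u0) \<le> a * exp (c*t1) * (- ln (l t1))"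
proof -
  define e where "e = sgn (u t1 - u0)"
  have ne: "norm e \<le> 1" by (simp add: e_def norm_sgn)
  have "(\<lambda>y. a * exp (c*y) * (- ln (l y)) - (u y - u0) \<bullet> e) 0 \<le> (\<lambda>y. a * exp (c*y) * (- ln (l y)) - (u y - u0) \<bullet> e) t1"
  proof (rule DERIV_nonneg_imp_increasing_open[OF t1])
    fix x assume x: "0 < x" "x < t1"
    have lx: "l x > 0" using lpos x by auto
    define l' where "l' = - ((nV x)^2) + c * M x"
    have D: "((\<lambda>y. a * exp (c*y) * (- ln (l y)) - (u y - u0) \<bullet> e) has_real_derivative
        a * (exp (c*x) * c * (- ln (l x)) + exp (c*x) * (- (l' / l x))) - W x \<bullet> e) (at x)"
      using ld[of x] x lx vd_inner[OF ud[of x], of u0 e] unfolding l'_def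
      by (auto intro!: derivative_eq_intros simp: field_simps)
    have cm: "c * M x \<le> c * (- l x * ln (l x))" using mult_left_mono[OF M_up[of x] c] x by simp
    have "c * (- ln (l x)) + (- (l' / l x)) = ((nV x)^2 + (- c * M x - c * l x * ln (l x))) / l x"
      using lx by (simp add: l'_def field_simps)
    also have "\<dots> \<ge> (nV x)^2 / l x"
      using cm lx by (intro divide_right_mono) (auto simp: algebra_simps)
    finally have "a * exp (c*x) * ((nV x)^2 / l x) \<le> a * exp (c*x) * (c * (- ln (l x)) + (- (l' / l x)))"
      using a by (intro mult_left_mono) auto
    moreover have "W x \<bullet> e \<le> norm (W x)"
      using Cauchy_Schwarz_ineq2[of "W x" e] ne
      by (smt (verit) mult_left_le norm_ge_zero)
    moreover have "norm (W x) \<le> a * exp (c*x) * (nV x)^2 / l x" using reg1 x by auto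
    ultimately have "0 \<le> a * (exp (c*x) * c * (- ln (l x)) + exp (c*x) * (- (l' / l x))) - W x \<bullet> e"
      by (simp add: algebra_simps)
    thus "\<exists>y. ((\<lambda>y. a * exp (c*y) * (- ln (l y)) - (u y - u0) \<bullet> e) has_real_derivative y) (at x) \<and> 0 \<le> y"
      using D by blast
  next
    have "continuous_on {0..t1} l" using lcont by (rule continuous_on_subset) auto
    moreover have "continuous_on {0..t1} u" using ucont by (rule continuous_on_subset) auto
    moreover have "\<forall>y\<in>{0..t1}. l y > 0" using lpos by auto
    ultimately show "continuous_on {0..t1} (\<lambda>y. a * exp (c*y) * (- ln (l y)) - (u y - u0) \<bullet> e)"
      by (intro continuous_intros) auto
  qed
  hence "(u t1 - u0) \<bullet> e \<le> a * exp (c*t1) * (- ln (l t1))" using l0 u0 by simp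
  moreover have "(u t1 - u0) \<bullet> e = norm (u t1 - u0)"
    by (cases "u t1 = u0") (simp_all add: e_def sgn_div_norm power2_norm_eq_inner[symmetric] power2_eq_square)
  ultimately show ?thesis by simp
qed


lemma core:
  fixes l M nV :: "real \<Rightarrow> real" and u W :: "real \<Rightarrow> 'a::real_inner"
  assumes lpos: "\<And>t. t \<ge> 0 \<Longrightarrow> l t > 0"
    and l0: "l 0 = 1"
    and lcont: "continuous_on {0..} l"
    and ld: "\<And>t. t > 0 \<Longrightarrow> (l has_real_derivative (- ((nV t)^2) + c * M t)) (at t)"
    and M_up: "\<And>t. t \<ge> 0 \<Longrightarrow> M t \<le> - l t * ln (l t)"
    and M_low': "\<And>t. t \<ge> 0 \<Longrightarrow> l t \<le> 1 \<Longrightarrow> M t \<ge> - kk * l t"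
    and ucont: "continuous_on {0..} u"
    and u0: "u 0 = u0"
    and ud: "\<And>t. t > 0 \<Longrightarrow> (u has_vector_derivative W t) (at t)"
    and reg: "\<And>t. t > 0 \<Longrightarrow> norm (u t - u0) < eps \<Longrightarrow>
        norm (W t) \<le> a * exp (c*t) * (nV t)^2 / l t \<and> (nV t)^2 \<le> b * (l t)^2"
    and c: "c \<ge> 0" and a: "a \<ge> 0" and b: "b \<ge> 0" and kk: "kk \<ge> 0"
    and small: "\<And>t. 0 \<le> t \<Longrightarrow> t \<le> T \<Longrightarrow> a * exp (c*t) * (c*kk*t + ln (1 + b*t)) < eps"
  shows "\<And>t. 0 \<le> t \<Longrightarrow> t \<le> T \<Longrightarrow> norm (u t - u0) \<le> a * exp (c*t) * (c*kk*t + ln (1 + b*t))"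
proof -
  have l_le1: "\<And>t. t \<ge> 0 \<Longrightarrow> l t \<le> 1"
    using core_l_le1[OF lpos l0 lcont ld M_up c] by blast
  have M_low: "\<And>t. t \<ge> 0 \<Longrightarrow> M t \<ge> - kk * l t" using M_low' l_le1 by blast
  have B: "norm (u t1 - u0) \<le> a * exp (c*t1) * (c*kk*t1 + ln (1 + b*t1))"
    if t1: "0 \<le> t1" and hyp: "\<And>s. 0 < s \<Longrightarrow> s < t1 \<Longrightarrow> norm (u s - u0) < eps" for t1
  proof -
    have "norm (u t1 - u0) \<le> a * exp (c*t1) * (- ln (l t1))"
      by (rule core_norm_bound[OF lpos l0 lcont ld M_up l_le1 ucont u0 ud _ c a t1])
         (use reg hyp in auto)
    also have "\<dots> \<le> a * exp (c*t1) * (c*kk*t1 + ln (1 + b*t1))"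
      by (intro mult_left_mono core_Lambda_bound[OF lpos l0 lcont ld M_low _ c kk b t1])
         (use reg hyp a in auto)
    finally show ?thesis .
  qed
  define E where "E = {0..T} \<inter> (\<lambda>t. norm (u t - u0)) -` {eps..}"
  have E_empty: "E = {}"
  proof (rule ccontr)
    assume ne: "E \<noteq> {}"
    have "continuous_on {0..T} (\<lambda>t. norm (u t - u0))"
      by (intro continuous_intros continuous_on_subset[OF ucont]) auto
    hence cl: "closed E" unfolding E_def by (intro continuous_closed_preimage) auto
    have bdd: "bdd_below E" unfolding E_def by (rule bdd_belowI[of _ 0]) auto
    define ts where "ts = Inf E"
    have tsE: "ts \<in> E" using closed_contains_Inf[OF ne bdd cl] by (simp add: ts_def)
    hence ts: "0 \<le> ts" "ts \<le> T" "eps \<le> norm (u ts - u0)" unfolding E_def by auto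
    have "norm (u ts - u0) \<le> a * exp (c*ts) * (c*kk*ts + ln (1 + b*ts))"
    proof (rule B[OF ts(1)])
      fix s assume s: "0 < s" "s < ts"
      show "norm (u s - u0) < eps"
      proof (rule ccontr)
        assume "\<not> norm (u s - u0) < eps"
        hence "s \<in> E" using s ts unfolding E_def by auto
        hence "ts \<le> s" unfolding ts_def using bdd by (rule cInf_lower)
        thus False using s by simp
      qed
    qed
    also have "\<dots> < eps" using small ts by auto
    finally show False using ts by simp
  qed
  fix t assume t: "0 \<le> t" "t \<le> T"
  show "norm (u t - u0) \<le> a * exp (c*t) * (c*kk*t + ln (1 + b*t))"
  proof (rule B[OF t(1)])
    fix s assume s: "0 < s" "s < t"
    hence "s \<notin> E" using E_empty by auto
    thus "norm (u s - u0) < eps" using s t unfolding E_def by auto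
  qed
qed




definition Gc :: "nat \<Rightarrow> (nat \<Rightarrow> 'x) \<Rightarrow> (nat \<Rightarrow> real) \<Rightarrow> ('a::real_inner \<Rightarrow> 'x \<Rightarrow> real) \<Rightarrow> 'a \<Rightarrow> real" where
  "Gc n xs ys f th0 = (\<Sum>i<n. norm (grad (\<lambda>th. f th (xs i)) th0)) + gamma_ntk n xs ys f th0"

lemma flow_bound:
  fixes n :: nat and xs :: "nat \<Rightarrow> 'x" and ys :: "nat \<Rightarrow> real"
    and f :: "'a::euclidean_space \<Rightarrow> 'x \<Rightarrow> real"
    and L eps la al T :: real and th0 :: 'a and theta :: "real \<Rightarrow> 'a"
  assumes n_pos: "n \<ge> 1"
    and labels: "\<forall>i<n. ys i \<in> {-1, 1}"
    and L_ge: "L \<ge> 1"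
    and diff: "\<And>i x. (\<lambda>th. f th (xs i)) differentiable (at x)"
    and homog: "\<forall>x c th. c > 0 \<longrightarrow> f (c *\<^sub>R th) x = c powr L * f th x"
    and init_zero: "\<forall>x. f th0 x = 0"
    and eps_pos: "eps > 0"
    and eps_prop: "\<forall>th. norm (th - th0) < eps \<longrightarrow>
        (\<forall>i<n. norm (grad (\<lambda>th. f th (xs i)) th - grad (\<lambda>th. f th (xs i)) th0)
                 < gamma_ntk n xs ys f th0 / 2)"
    and al: "al > 0" and la: "la > 0"
    and th_init: "theta 0 = al *\<^sub>R th0"
    and flow: "\<forall>t\<ge>0. (theta has_vector_derivative
        - grad (reg_loss la n xs ys f) (theta t)) (at t within {0..})"
    and small: "\<And>t. 0 \<le> t \<Longrightarrow> t \<le> T \<Longrightarrow>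
        (2 / gamma_ntk n xs ys f th0 * al powr (-L)) * exp ((L*la)*t) *
          ((L*la)*ln (real n)*t + ln (1 + ((Gc n xs ys f th0)^2 * al powr (2*L-2))*t)) < eps"
  shows "\<And>t. 0 \<le> t \<Longrightarrow> t \<le> T \<Longrightarrow> norm ((exp (la*t) / al) *\<^sub>R theta t - th0) \<le>
        (2 / gamma_ntk n xs ys f th0 * al powr (-L)) * exp ((L*la)*t) *
          ((L*la)*ln (real n)*t + ln (1 + ((Gc n xs ys f th0)^2 * al powr (2*L-2))*t))"
proof -
  define \<gamma> where "\<gamma> = gamma_ntk n xs ys f th0"
  define G where "G = Gc n xs ys f th0"
  define h where "h = h_ntk n xs ys f th0"
  define g where "g i x = grad (\<lambda>th. f th (xs i)) x" for i x
  define a where "a = 2 / \<gamma> * al powr (-L)"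
  define b where "b = G^2 * al powr (2*L-2)"
  have n0: "0 < n" using n_pos by simp
  have \<gamma>pos: "\<gamma> > 0"
  proof -
    have "norm (th0 - th0) < eps" using eps_pos by simp
    hence "norm (grad (\<lambda>th. f th (xs 0)) th0 - grad (\<lambda>th. f th (xs 0)) th0) < gamma_ntk n xs ys f th0 / 2"
      using eps_prop n0 by blast
    thus ?thesis unfolding \<gamma>_def by simp
  qed
  have nh: "norm h \<le> 1" by (simp add: h_def h_ntk_def norm_sgn)
  have yabs: "\<bar>ys i\<bar> = 1" if "i < n" for i using labels that by auto
  have gam_le: "\<gamma> \<le> ys i * (g i th0 \<bullet> h)" if i: "i < n" for i
    unfolding \<gamma>_def gamma_ntk_def g_def h_def using i by (intro Min_le) auto
  have Gdef: "G = (\<Sum>i<n. norm (g i th0)) + \<gamma>" by (simp add: G_def Gc_def g_def \<gamma>_def)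
  have region: "ys i * (g i v \<bullet> h) \<ge> \<gamma> / 2 \<and> norm (g i v) \<le> G"
    if i: "i < n" and v: "norm (v - th0) < eps" for i v
  proof -
    have d: "norm (g i v - g i th0) < \<gamma> / 2" using eps_prop v i unfolding g_def \<gamma>_def by blast
    have "\<bar>ys i * ((g i v - g i th0) \<bullet> h)\<bar> \<le> norm (g i v - g i th0) * norm h"
      using yabs[OF i] by (simp add: abs_mult Cauchy_Schwarz_ineq2)
    also have "\<dots> \<le> norm (g i v - g i th0)" using nh by (simp add: mult_left_le)
    finally have "\<bar>ys i * ((g i v - g i th0) \<bullet> h)\<bar> < \<gamma> / 2" using d by simp
    moreover have "ys i * ((g i v - g i th0) \<bullet> h) = ys i * (g i v \<bullet> h) - ys i * (g i th0 \<bullet> h)"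
      by (simp add: inner_diff_left algebra_simps)
    ultimately have A: "ys i * (g i v \<bullet> h) \<ge> \<gamma> / 2" using gam_le[OF i]
      by linarith
    have "norm (g i v) \<le> norm (g i th0) + norm (g i v - g i th0)" by (metis norm_triangle_sub add.commute)
    also have "\<dots> \<le> (\<Sum>j<n. norm (g j th0)) + \<gamma>"
      using d i \<gamma>pos by (intro add_mono member_le_sum) auto
    finally show ?thesis using A Gdef by simp
  qed
  have Gnn: "G \<ge> 0" using Gdef \<gamma>pos by (simp add: sum_nonneg)
  have homi: "\<And>c x. c > 0 \<Longrightarrow> (\<lambda>th. f th (xs i)) (c *\<^sub>R x) = c powr L * (\<lambda>th. f th (xs i)) x" for i
    using homog by simp
  have g_hom: "g i (c *\<^sub>R x) = c powr (L - 1) *\<^sub>R g i x" if "c > 0" for i c x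
    unfolding g_def using grad_homog[OF diff homi that] by simp
  have eul: "g i x \<bullet> x = L * f x (xs i)" for i x
    unfolding g_def using euler[OF diff homi] by simp
  have grad_reg: "grad (reg_loss la n xs ys f) x = Fv n xs ys f x + la *\<^sub>R x" for x
    by (rule grad_eq[OF gderiv_reg_loss[where xs=xs and f=f, OF diff]])
  have flow': "(theta has_vector_derivative - (Fv n xs ys f (theta t) + la *\<^sub>R theta t)) (at t within {0..})"
    if "t \<ge> 0" for t using flow that grad_reg by simp
  have flow_at: "(theta has_vector_derivative - (Fv n xs ys f (theta t) + la *\<^sub>R theta t)) (at t)"
    if "t > 0" for t
  proof -
    have "at t within {0..} = at t" using that by (intro at_within_open_subset[of t "{0<..}"]) auto
    thus ?thesis using flow'[of t] that by simp
  qed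
  have thcont: "continuous_on {0..} theta"
    using flow' has_vector_derivative_continuous continuous_on_eq_continuous_within by fastforce
  have fcont: "continuous_on {0..} (\<lambda>t. f (theta t) (xs i))" for i
  proof -
    have "continuous_on UNIV (\<lambda>th. f th (xs i))"
      by (simp add: continuous_at_imp_continuous_on differentiable_imp_continuous_within diff)
    thus ?thesis using continuous_on_compose2[OF _ thcont, of UNIV] by auto
  qed
  define l where "l t = exp_loss n xs ys f (theta t)" for t
  define M where "M t = 1 / real n * (\<Sum>i<n. exp (- (ys i * f (theta t) (xs i))) * (ys i * f (theta t) (xs i)))" for t
  define nV where "nV t = norm (Fv n xs ys f (theta t))" for t
  define u where "u t = (exp (la*t) / al) *\<^sub>R theta t" for t
  define W where "W t = (exp (la*t) / al) *\<^sub>R (- Fv n xs ys f (theta t))" for t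
  have l_eq: "l t = 1 / real n * (\<Sum>i<n. exp (- (ys i * f (theta t) (xs i))))" for t
    by (simp add: l_def exp_loss_def)
  have lpos: "l t > 0" for t
    unfolding l_eq using n0 by (intro mult_pos_pos sum_pos) (auto simp: lessThan_empty_iff)
  have l0: "l 0 = 1"
    using init_zero homog al n0 by (simp add: l_eq th_init)
  have lcont: "continuous_on {0..} l"
    unfolding l_eq by (intro continuous_intros fcont)
  have ld: "(l has_real_derivative (- ((nV t)^2) + (L*la) * M t)) (at t)" if t: "t > 0" for t
  proof -
    have D: "(l has_real_derivative (- (Fv n xs ys f (theta t) + la *\<^sub>R theta t)) \<bullet> Fv n xs ys f (theta t)) (at t)"
      unfolding l_def[abs_def] by (rule chain_gderiv[OF gderiv_exp_loss[where xs=xs and f=f, OF diff] flow_at[OF t]])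
    have "theta t \<bullet> Fv n xs ys f (theta t) = - L * M t"
      unfolding M_def by (rule Fv_inner_self) (use eul g_def in simp)
    hence "(- (Fv n xs ys f (theta t) + la *\<^sub>R theta t)) \<bullet> Fv n xs ys f (theta t) = - ((nV t)^2) + (L*la) * M t"
      by (simp add: nV_def inner_add_left power2_norm_eq_inner algebra_simps)
    thus ?thesis using D by simp
  qed
  have M_up: "M t \<le> - l t * ln (l t)" for t
    unfolding M_def l_eq by (rule M_up_lemma[OF n_pos])
  have M_low': "M t \<ge> - ln (real n) * l t" if "l t \<le> 1" for t
    unfolding M_def l_eq by (rule M_low_lemma[OF n_pos]) (use that l_eq in simp)
  have ucont: "continuous_on {0..} u"
    unfolding u_def using al by (intro continuous_intros thcont) auto
  have u0: "u 0 = th0" using al by (simp add: u_def th_init)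
  have ud: "(u has_vector_derivative W t) (at t)" if t: "t > 0" for t
  proof -
    have "((\<lambda>t. exp (la*t) / al) has_real_derivative la * exp (la*t) / al) (at t)"
      using al by (auto intro!: derivative_eq_intros)
    from has_vector_derivative_scaleR[OF this flow_at[OF t]]
    have "(u has_vector_derivative (exp (la*t) / al) *\<^sub>R (- (Fv n xs ys f (theta t) + la *\<^sub>R theta t))
        + (la * exp (la*t) / al) *\<^sub>R theta t) (at t)" unfolding u_def[abs_def] .
    moreover have "(exp (la*t) / al) *\<^sub>R (- (Fv n xs ys f (theta t) + la *\<^sub>R theta t))
        + (la * exp (la*t) / al) *\<^sub>R theta t = W t"
      by (simp add: W_def algebra_simps)
    ultimately show ?thesis by simp
  qed
  have reg: "norm (W t) \<le> a * exp ((L*la)*t) * (nV t)^2 / l t \<and> (nV t)^2 \<le> b * (l t)^2"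
    if t: "t > 0" and ut: "norm (u t - th0) < eps" for t
  proof -
    define q where "q = al * exp (- (la*t))"
    have qpos: "q > 0" using al by (simp add: q_def)
    have th_eq: "theta t = q *\<^sub>R u t" using al by (simp add: q_def u_def exp_minus field_simps)
    define Q where "Q = q powr (L - 1)"
    have Qpos: "Q > 0" using qpos by (simp add: Q_def)
    have Q_le: "Q \<le> al powr (L - 1)"
      unfolding Q_def q_def using al la t L_ge
      by (intro powr_mono2) (auto simp: mult_le_cancel_left1)
    have Q_eq: "al powr (-L) * exp ((L*la)*t) * Q = exp (la*t) / al"
    proof -
      have "Q = al powr (L - 1) * exp (- (la*t) * (L - 1))"
        using al by (simp add: Q_def q_def powr_mult exp_powr_real)
      hence "al powr (-L) * exp ((L*la)*t) * Q = (al powr (-L) * al powr (L - 1)) * (exp ((L*la)*t) * exp (- (la*t) * (L - 1)))"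
        by (simp add: algebra_simps)
      also have "\<dots> = al powr (-1) * exp (la * t)"
        by (simp add: powr_add[symmetric] exp_add[symmetric] algebra_simps)
      finally show ?thesis using al by (simp add: powr_minus divide_inverse mult.commute)
    qed
    define e where "e i = exp (- (ys i * f (theta t) (xs i)))" for i
    define S where "S = (\<Sum>i<n. (e i * ys i) *\<^sub>R g i (u t))"
    have Fv_eq: "Fv n xs ys f (theta t) = - ((1 / real n * Q) *\<^sub>R S)"
    proof -
      have "Fv n xs ys f (theta t) = - ((1 / real n) *\<^sub>R (\<Sum>i<n. (e i * ys i) *\<^sub>R (Q *\<^sub>R g i (u t))))"
        unfolding Fv_def e_def Q_def using g_hom[OF qpos] by (simp add: th_eq g_def)
      also have "\<dots> = - ((1 / real n * Q) *\<^sub>R S)"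
        by (simp add: S_def scaleR_sum_right mult.commute mult.left_commute)
      finally show ?thesis .
    qed
    have lsum: "l t = 1 / real n * (\<Sum>i<n. e i)" by (simp add: l_eq e_def)
    have epos: "\<And>i. i < n \<Longrightarrow> e i \<ge> 0" by (simp add: e_def)
    have reg_u: "\<And>i. i<n \<Longrightarrow> ys i * (g i (u t) \<bullet> h) \<ge> \<gamma> / 2" "\<And>i. i<n \<Longrightarrow> norm (g i (u t)) \<le> G"
      using region ut by auto
    have S1: "S \<bullet> h \<ge> \<gamma> / 2 * (\<Sum>i<n. e i)"
      unfolding S_def by (rule weighted_bounds(1)[OF epos yabs reg_u(1) reg_u(2)])
    have S2: "norm S \<le> G * (\<Sum>i<n. e i)"
      unfolding S_def by (rule weighted_bounds(2)[OF epos yabs reg_u(1) reg_u(2)])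
    have "S \<bullet> h \<le> norm S"
      using Cauchy_Schwarz_ineq2[of S h] nh by (smt (verit) mult_left_le norm_ge_zero)
    have nV_eq: "nV t = 1 / real n * Q * norm S" using Qpos by (simp add: nV_def Fv_eq)
    have lowV: "nV t \<ge> \<gamma> / 2 * Q * l t"
    proof -
      have "\<gamma> / 2 * Q * l t = 1 / real n * Q * (\<gamma> / 2 * (\<Sum>i<n. e i))" by (simp add: lsum algebra_simps)
      also have "\<dots> \<le> 1 / real n * Q * norm S"
        using S1 \<open>S \<bullet> h \<le> norm S\<close> Qpos by (intro mult_left_mono) auto
      finally show ?thesis using nV_eq by simp
    qed
    have upV: "nV t \<le> G * al powr (L - 1) * l t"
    proof -
      have "nV t \<le> 1 / real n * Q * (G * (\<Sum>i<n. e i))"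
        using S2 Qpos nV_eq by (simp add: divide_right_mono mult_left_mono)
      also have "\<dots> = Q * G * l t" by (simp add: lsum)
      also have "\<dots> \<le> al powr (L - 1) * G * l t"
        using Q_le Gnn lpos[of t] by (intro mult_right_mono) auto
      finally show ?thesis by (simp add: algebra_simps)
    qed
    have nVnn: "nV t \<ge> 0" by (simp add: nV_def)
    have H3: "(nV t)^2 \<le> b * (l t)^2"
    proof -
      have "(nV t)^2 \<le> (G * al powr (L - 1) * l t)^2" using upV nVnn by (intro power_mono) auto
      also have "\<dots> = b * (l t)^2"
        using al by (simp add: b_def power_mult_distrib powr_mult_base power2_eq_square powr_add[symmetric] algebra_simps)
      finally show ?thesis .
    qed
    have H2: "norm (W t) \<le> a * exp ((L*la)*t) * (nV t)^2 / l t"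
    proof -
      have "norm (W t) = exp (la*t) / al * nV t" using al by (simp add: W_def nV_def)
      also have "\<dots> = al powr (-L) * exp ((L*la)*t) * Q * nV t" using Q_eq by simp
      also have "\<dots> = (2 / \<gamma> * al powr (-L) * exp ((L*la)*t)) * (\<gamma> / 2 * Q) * nV t"
        using \<gamma>pos by simp
      also have "\<dots> \<le> (2 / \<gamma> * al powr (-L) * exp ((L*la)*t)) * (nV t / l t) * nV t"
      proof -
        have "\<gamma> / 2 * Q \<le> nV t / l t" using lowV lpos[of t] by (simp add: le_divide_eq)
        thus ?thesis using \<gamma>pos nVnn by (intro mult_right_mono mult_left_mono) auto
      qed
      also have "\<dots> = a * exp ((L*la)*t) * (nV t)^2 / l t"
        by (simp add: a_def power2_eq_square)
      finally show ?thesis .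
    qed
    show ?thesis using H2 H3 by blast
  qed
  have cnn: "L*la \<ge> 0" using L_ge la by simp
  have ann: "a \<ge> 0" using \<gamma>pos by (simp add: a_def)
  have bnn: "b \<ge> 0" by (simp add: b_def)
  have knn: "ln (real n) \<ge> 0" using n_pos by simp
  fix t assume t: "0 \<le> t" "t \<le> T"
  have "norm (u t - th0) \<le> a * exp ((L*la)*t) * ((L*la)*ln (real n)*t + ln (1 + b*t))"
    by (rule core[OF lpos l0 lcont ld M_up M_low' ucont u0 ud reg cnn ann bnn knn _ t])
       (use small in \<open>auto simp: a_def b_def \<gamma>_def G_def\<close>)
  thus "norm ((exp (la*t) / al) *\<^sub>R theta t - th0) \<le>
        (2 / gamma_ntk n xs ys f th0 * al powr (-L)) * exp ((L*la)*t) *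
          ((L*la)*ln (real n)*t + ln (1 + ((Gc n xs ys f th0)^2 * al powr (2*L-2))*t))"
    by (simp add: u_def a_def b_def \<gamma>_def G_def)
qed




lemma alpha_arith:
  fixes al la c1 p L G \<gamma> eps :: real and n :: nat
  assumes al: "al \<ge> 1" and la: "la > 0" and c1: "c1 > 0" and p: "p > 0" and L: "L \<ge> 1"
    and G: "G \<ge> 0" and \<gamma>: "\<gamma> > 0" and eps: "eps > 0" and n: "n \<ge> 1"
    and la_le: "la \<le> c1 * al powr (-p)"
    and X1: "al powr p / c1 \<ge> 1 + G^2 * ln al"
    and X2: "ln c1 \<le> p / 2 * ln al"
    and X3: "al powr p / c1 \<ge> exp 1"
    and t: "0 \<le> t" "t \<le> (ln al - ln (ln (al powr (2 * (L - 1)) / la)) / L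
               + min 0 (ln (eps / (2 * (2 / \<gamma> * (2 * L * ln (real n) / p + 2)))) / L)) / la"
  shows "(2 / \<gamma> * al powr (-L)) * exp ((L*la)*t) *
          ((L*la)*ln (real n)*t + ln (1 + (G^2 * al powr (2*L-2))*t))
         \<le> (2 / \<gamma> * (2 * L * ln (real n) / p + 2)) * (al powr (- L) * ln (al powr (2 * (L - 1)) / la)) * exp (L * la * t)"
    and "(2 / \<gamma> * (2 * L * ln (real n) / p + 2)) * (al powr (- L) * ln (al powr (2 * (L - 1)) / la)) * exp (L * la * t) \<le> eps / 2"
proof -
  define A where "A = al powr (2 * (L - 1)) / la"
  define K where "K = 2 * L * ln (real n) / p + 2"
  define C where "C = 2 / \<gamma> * K"
  define DT where "DT = min 0 (ln (eps / (2 * C)) / L)"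
  have alpos: "al > 0" using al by simp
  have lnal: "ln al \<ge> 0" using al by simp
  have lnn: "ln (real n) \<ge> 0" using n by simp
  have Kpos: "K \<ge> 2" using L p lnn by (simp add: K_def)
  have Cpos: "C > 0" using Kpos \<gamma> by (simp add: C_def)
  define X0 where "X0 = al powr p / c1"
  have X0pos: "X0 > 0" using alpos c1 by (simp add: X0_def)
  have AX: "A \<ge> X0"
  proof -
    have "al powr (2 * (L - 1)) \<ge> 1" using al L by (intro ge_one_powr_ge_zero) auto
    have "X0 = al powr p / c1" by (simp add: X0_def)
    also have "\<dots> \<le> al powr (2 * (L - 1)) * al powr p / c1"
      using \<open>al powr (2 * (L - 1)) \<ge> 1\<close> c1 alpos by (intro divide_right_mono) (auto intro: mult_le_cancel_right1[THEN iffD2])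
    also have "\<dots> = al powr (2 * (L - 1)) / (c1 * al powr (-p))"
      using alpos by (simp add: powr_minus field_simps)
    also have "\<dots> \<le> al powr (2 * (L - 1)) / la"
      using la la_le alpos by (intro divide_left_mono) auto
    finally show ?thesis by (simp add: A_def)
  qed
  have Apos: "A > 0" using AX X0pos by simp
  have lnA1: "ln A \<ge> 1"
  proof -
    have "exp 1 \<le> A" using X3 AX by (simp add: X0_def)
    thus ?thesis using Apos by (metis ln_exp ln_le_cancel_iff exp_gt_zero)
  qed
  have lnal_A: "ln al \<le> 2 / p * ln A"
  proof -
    have "ln X0 = p * ln al - ln c1" using alpos c1 by (simp add: X0_def ln_div ln_powr)
    hence "p / 2 * ln al \<le> ln X0" using X2 by simp
    also have "ln X0 \<le> ln A" using AX X0pos by simp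
    finally show ?thesis using p by (simp add: field_simps)
  qed
  have DT0: "DT \<le> 0" by (simp add: DT_def)
  have lnlnA: "ln (ln A) \<ge> 0" using lnA1 by simp
  have Lpos: "L > 0" using L by simp
  have tb: "t \<le> (ln al - ln (ln A) / L + DT) / la" using t(2) by (simp add: A_def DT_def C_def K_def)
  have lat: "la * t \<le> ln al - ln (ln A) / L + DT" using tb la by (simp add: field_simps)
  have lat2: "la * t \<le> ln al"
  proof -
    have "ln (ln A) / L \<ge> 0" using lnlnA Lpos by simp
    thus ?thesis using lat DT0 by linarith
  qed
  have latnn: "la * t \<ge> 0" using la t by simp
  have S1: "(L*la)*ln (real n)*t \<le> L * ln (real n) * (2 / p * ln A)"
  proof -
    have "(L*la)*ln (real n)*t = L * ln (real n) * (la * t)" by (simp add: algebra_simps)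
    also have "\<dots> \<le> L * ln (real n) * (2 / p * ln A)"
      using lat2 lnal_A Lpos lnn by (intro mult_left_mono) auto
    finally show ?thesis .
  qed
  have S2: "ln (1 + (G^2 * al powr (2*L-2))*t) \<le> 2 * ln A"
  proof -
    have eq: "al powr (2*L-2) = A * la" using la by (simp add: A_def algebra_simps)
    have "(G^2 * al powr (2*L-2))*t = G^2 * A * (la * t)" unfolding eq by (simp add: algebra_simps)
    also have "\<dots> \<le> G^2 * A * ln al" using lat2 Apos by (intro mult_left_mono) auto
    finally have a1: "1 + (G^2 * al powr (2*L-2))*t \<le> 1 + G^2 * A * ln al" by simp
    have A1: "A \<ge> 1 + G^2 * ln al" using AX X1 by (simp add: X0_def)
    have "1 + G^2 * A * ln al \<le> A * A"
    proof -
      have "A * A \<ge> A * (1 + G^2 * ln al)" using A1 Apos by (intro mult_left_mono) auto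
      moreover have "A \<ge> 1" using A1 G lnal by (smt (verit) zero_le_power2 mult_nonneg_nonneg)
      ultimately show ?thesis by (simp add: algebra_simps)
    qed
    hence "1 + (G^2 * al powr (2*L-2))*t \<le> A * A" using a1 by simp
    moreover have "1 + (G^2 * al powr (2*L-2))*t > 0"
      using alpos t by (intro add_pos_nonneg) auto
    ultimately have "ln (1 + (G^2 * al powr (2*L-2))*t) \<le> ln (A * A)" by simp
    also have "\<dots> = 2 * ln A" using Apos by (simp add: ln_mult)
    finally show ?thesis .
  qed
  have sumK: "(L*la)*ln (real n)*t + ln (1 + (G^2 * al powr (2*L-2))*t) \<le> K * ln A"
    using S1 S2 p by (simp add: K_def algebra_simps)
  have "(2 / \<gamma> * al powr (-L)) * exp ((L*la)*t) *
          ((L*la)*ln (real n)*t + ln (1 + (G^2 * al powr (2*L-2))*t))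
        \<le> (2 / \<gamma> * al powr (-L)) * exp ((L*la)*t) * (K * ln A)"
    using sumK \<gamma> by (intro mult_left_mono) auto
  also have "\<dots> = C * (al powr (- L) * ln A) * exp (L * la * t)"
    by (simp add: C_def algebra_simps)
  finally show "(2 / \<gamma> * al powr (-L)) * exp ((L*la)*t) *
          ((L*la)*ln (real n)*t + ln (1 + (G^2 * al powr (2*L-2))*t))
         \<le> (2 / \<gamma> * (2 * L * ln (real n) / p + 2)) * (al powr (- L) * ln (al powr (2 * (L - 1)) / la)) * exp (L * la * t)"
    by (simp add: C_def K_def A_def)
  have "exp (L * la * t) \<le> exp (L * (ln al - ln (ln A) / L + DT))"
    using lat Lpos by (simp add: mult_left_mono)
  also have "\<dots> = al powr L / ln A * exp (L * DT)"
    using Lpos alpos lnA1 by (simp add: algebra_simps exp_diff exp_add powr_def exp_ln)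
  finally have e1: "exp (L * la * t) \<le> al powr L / ln A * exp (L * DT)" .
  have "exp (L * DT) \<le> eps / (2 * C)"
  proof -
    have "L * DT \<le> ln (eps / (2 * C))" using Lpos unfolding DT_def
      by (simp add: min_def field_simps)
    hence "exp (L * DT) \<le> exp (ln (eps / (2 * C)))" by simp
    thus ?thesis using eps Cpos by simp
  qed
  have "C * (al powr (- L) * ln A) * exp (L * la * t) \<le> C * (al powr (- L) * ln A) * (al powr L / ln A * exp (L * DT))"
    using e1 Cpos lnA1 by (intro mult_left_mono) auto
  also have "\<dots> = C * exp (L * DT)" using alpos lnA1 by (simp add: powr_minus field_simps)
  also have "\<dots> \<le> C * (eps / (2 * C))" using \<open>exp (L * DT) \<le> eps / (2 * C)\<close> Cpos by (intro mult_left_mono) auto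
  also have "\<dots> = eps / 2" using Cpos by simp
  finally show "(2 / \<gamma> * (2 * L * ln (real n) / p + 2)) * (al powr (- L) * ln (al powr (2 * (L - 1)) / la)) * exp (L * la * t) \<le> eps / 2"
    by (simp add: C_def K_def A_def)
qed


theorem lemmaC5:
  fixes n :: nat
    and xs :: "nat \<Rightarrow> 'x"
    and ys :: "nat \<Rightarrow> real"
    and f :: "'a::euclidean_space \<Rightarrow> 'x \<Rightarrow> real"
    and L :: real
    and th0 :: 'a
    and p :: real
    and lam :: "real \<Rightarrow> real"
    and eps :: real
    and theta :: "real \<Rightarrow> real \<Rightarrow> 'a"
  assumes n_pos: "n \<ge> 1"
    and labels: "\<forall>i<n. ys i \<in> {-1, 1}"
    and L_ge: "L \<ge> 1"
    and C2: "\<forall>x. C2_fun (\<lambda>th. f th x)"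
    and homog: "\<forall>x c th. c > 0 \<longrightarrow> f (c *\<^sub>R th) x = c powr L * f th x"
    and init_zero: "\<forall>x. f th0 x = 0"
    and p_pos: "p > 0"
    and lam_pos: "\<forall>alpha>0. lam alpha > 0"
    and lam_Theta: "lam \<in> \<Theta>(\<lambda>alpha. alpha powr (- p))"
    and sep: "\<exists>h. \<forall>i<n. ys i * inner (grad (\<lambda>th. f th (xs i)) th0) h > 0"
    and eps_pos: "eps > 0"
    and eps_prop: "\<forall>th. norm (th - th0) < eps \<longrightarrow>
        (\<forall>i<n. norm (grad (\<lambda>th. f th (xs i)) th - grad (\<lambda>th. f th (xs i)) th0)
                 < gamma_ntk n xs ys f th0 / 2)"
    and flow_init: "\<forall>alpha>0. theta alpha 0 = alpha *\<^sub>R th0"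
    and flow: "\<forall>alpha>0. \<forall>t\<ge>0. (theta alpha has_vector_derivative
        - grad (reg_loss (lam alpha) n xs ys f) (theta alpha t)) (at t within {0..})"
  shows "\<exists>DeltaT C. \<forall>\<^sub>F alpha in at_top.
     (let A = alpha powr (2 * (L - 1)) / lam alpha;
          Tb = (ln alpha - ln (ln A) / L + DeltaT) / lam alpha
      in T_max (lam alpha) alpha (theta alpha) th0 eps \<ge> ereal Tb \<and>
         (\<forall>t. 0 \<le> t \<and> t \<le> Tb \<longrightarrow>
            norm ((exp (lam alpha * t) / alpha) *\<^sub>R theta alpha t - th0)
              \<le> C * (alpha powr (- L) * ln A) * exp (L * lam alpha * t)))"
proof -
  have diff: "\<And>i x. (\<lambda>th. f th (xs i)) differentiable (at x)"
    using C2 unfolding C2_fun_def by blast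
  define \<gamma> where "\<gamma> = gamma_ntk n xs ys f th0"
  define G where "G = Gc n xs ys f th0"
  define K where "K = 2 * L * ln (real n) / p + 2"
  define C where "C = 2 / \<gamma> * K"
  define DT where "DT = min 0 (ln (eps / (2 * C)) / L)"
  have n0: "0 < n" using n_pos by simp
  have \<gamma>pos: "\<gamma> > 0"
  proof -
    have "norm (th0 - th0) < eps" using eps_pos by simp
    hence "norm (grad (\<lambda>th. f th (xs 0)) th0 - grad (\<lambda>th. f th (xs 0)) th0) < gamma_ntk n xs ys f th0 / 2"
      using eps_prop n0 by blast
    thus ?thesis unfolding \<gamma>_def by simp
  qed
  have Gnn: "G \<ge> 0" using \<gamma>pos by (simp add: G_def Gc_def \<gamma>_def[symmetric] sum_nonneg)
  from bigthetaD1[OF lam_Theta] obtain c1 where c1: "c1 > 0"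
    and c1ev: "eventually (\<lambda>x. norm (lam x) \<le> c1 * norm (x powr (-p))) at_top"
    by (elim landau_o.bigE)
  have ev1: "eventually (\<lambda>x::real. x powr p / c1 \<ge> 1 + G^2 * ln x) at_top"
    using p_pos c1 by real_asymp
  have ev2: "eventually (\<lambda>x::real. p / 2 * ln x \<ge> ln c1) at_top"
    using p_pos c1 by real_asymp
  have ev3: "eventually (\<lambda>x::real. x powr p / c1 \<ge> exp 1) at_top"
    using p_pos c1 by real_asymp
  have ev4: "eventually (\<lambda>x::real. x \<ge> 1) at_top" by (rule eventually_ge_at_top)
  show ?thesis
  proof (rule exI[of _ DT], rule exI[of _ C])
    show "\<forall>\<^sub>F alpha in at_top.
     (let A = alpha powr (2 * (L - 1)) / lam alpha;
          Tb = (ln alpha - ln (ln A) / L + DT) / lam alpha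
      in T_max (lam alpha) alpha (theta alpha) th0 eps \<ge> ereal Tb \<and>
         (\<forall>t. 0 \<le> t \<and> t \<le> Tb \<longrightarrow>
            norm ((exp (lam alpha * t) / alpha) *\<^sub>R theta alpha t - th0)
              \<le> C * (alpha powr (- L) * ln A) * exp (L * lam alpha * t)))"
      using c1ev ev1 ev2 ev3 ev4
    proof eventually_elim
      case (elim al)
      have al: "al \<ge> 1" using elim by simp
      have alpos: "al > 0" using al by simp
      define la where "la = lam al"
      have la: "la > 0" using lam_pos alpos by (simp add: la_def)
      have la_le: "la \<le> c1 * al powr (-p)" using elim la by (simp add: la_def)
      define A where "A = al powr (2 * (L - 1)) / la"
      define Tb where "Tb = (ln al - ln (ln A) / L + DT) / la"
      have Tb_eq: "Tb = (ln al - ln (ln (al powr (2 * (L - 1)) / la)) / L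
               + min 0 (ln (eps / (2 * (2 / \<gamma> * (2 * L * ln (real n) / p + 2)))) / L)) / la"
        by (simp add: Tb_def A_def DT_def C_def K_def)
      note AA = alpha_arith[OF al la c1 p_pos L_ge Gnn \<gamma>pos eps_pos n_pos la_le
                 elim(2) elim(3) elim(4)]
      have B1: "(2 / \<gamma> * al powr (-L)) * exp ((L*la)*t) *
          ((L*la)*ln (real n)*t + ln (1 + (G^2 * al powr (2*L-2))*t))
         \<le> C * (al powr (- L) * ln A) * exp (L * la * t)" if "0 \<le> t" "t \<le> Tb" for t
        using AA(1)[of t] that Tb_eq by (simp add: C_def K_def A_def)
      have B2: "C * (al powr (- L) * ln A) * exp (L * la * t) \<le> eps / 2" if "0 \<le> t" "t \<le> Tb" for t
        using AA(2)[of t] that Tb_eq by (simp add: C_def K_def A_def)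
      have FB: "norm ((exp (la*t) / al) *\<^sub>R theta al t - th0) \<le>
        (2 / \<gamma> * al powr (-L)) * exp ((L*la)*t) *
          ((L*la)*ln (real n)*t + ln (1 + (G^2 * al powr (2*L-2))*t))" if t: "0 \<le> t" "t \<le> Tb" for t
        unfolding \<gamma>_def G_def
      proof (rule flow_bound[OF n_pos labels L_ge diff homog init_zero eps_pos eps_prop alpos la _ _ _ t])
        show "theta al 0 = al *\<^sub>R th0" using flow_init alpos by simp
        show "\<forall>t\<ge>0. (theta al has_vector_derivative - grad (reg_loss la n xs ys f) (theta al t)) (at t within {0..})"
          using flow alpos by (simp add: la_def)
        fix r assume r: "0 \<le> r" "r \<le> Tb"
        have "(2 / \<gamma> * al powr (-L)) * exp ((L*la)*r) *
          ((L*la)*ln (real n)*r + ln (1 + (G^2 * al powr (2*L-2))*r)) \<le> eps / 2"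
          using B1[OF r] B2[OF r] by linarith
        also have "\<dots> < eps" using eps_pos by simp
        finally show "(2 / gamma_ntk n xs ys f th0 * al powr (-L)) * exp ((L*la)*r) *
          ((L*la)*ln (real n)*r + ln (1 + ((Gc n xs ys f th0)^2 * al powr (2*L-2))*r)) < eps"
          by (simp add: \<gamma>_def G_def)
      qed
      have main: "norm ((exp (la*t) / al) *\<^sub>R theta al t - th0) \<le> C * (al powr (- L) * ln A) * exp (L * la * t)"
        if "0 \<le> t" "t \<le> Tb" for t
        using FB[OF that] B1[OF that] by linarith
      have small: "norm ((exp (la*t) / al) *\<^sub>R theta al t - th0) \<le> eps / 2"
        if "0 \<le> t" "t \<le> Tb" for t
        using main[OF that] B2[OF that] by linarith
      have Tm: "T_max la al (theta al) th0 eps \<ge> ereal Tb"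
        unfolding T_max_def
      proof (rule Inf_greatest)
        fix x assume "x \<in> ereal ` {t. t \<ge> 0 \<and> norm ((exp (la * t) / al) *\<^sub>R theta al t - th0) > eps}"
        then obtain t where x: "x = ereal t" and t: "t \<ge> 0" "norm ((exp (la * t) / al) *\<^sub>R theta al t - th0) > eps"
          by auto
        have "\<not> t \<le> Tb"
        proof
          assume "t \<le> Tb"
          hence "norm ((exp (la * t) / al) *\<^sub>R theta al t - th0) \<le> eps / 2" using small t by blast
          thus False using t eps_pos by simp
        qed
        thus "ereal Tb \<le> x" using x by simp
      qed
      have fin: "ereal Tb \<le> T_max (lam al) al (theta al) th0 eps \<and>
         (\<forall>t. 0 \<le> t \<and> t \<le> Tb \<longrightarrow>
            norm ((exp (lam al * t) / al) *\<^sub>R theta al t - th0)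
              \<le> C * (al powr (- L) * ln A) * exp (L * lam al * t))"
        using Tm main unfolding la_def by blast
      show ?case unfolding Let_def using fin unfolding A_def Tb_def la_def .
    qed
  qed
qed

end
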